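(* Let $G=G_{(X,I)}=(Q,A,E)$ be a $d$-dim PNS with $J=[1,d]\setminus I$. For all $p\in Q$ and $x,y\in\mathbb{N}^J$: $(p,x)\dashrightarrow^*(p,y)$ in $G$ if and only if $y-x\in(A_{SC}^G)_\Delta^*$ (i.e., $x\dashrightarrow^* y$ in the net $A_{SC}^G$). Moreover, $\|A_{SC}^G\|\leq\|A\|\cdot|Q|$.
   Context: A $d$-dim Petri net $A$ is a finite set of actions $(a_-,a_+)\in\mathbb{N}^d\times\mathbb{N}^d$, with $\Delta(a)=a_+-a_-$ and $\|A\|$ the maximal entry of all $a_-,a_+$; for an action sequence $\sigma=a_1\cdots a_k$, $\Delta(\sigma)=\sum_j\Delta(a_j)$. $A$ is conservative if some $w\in(\mathbb{N}_+)^d$ satisfies $\langle\Delta(a),w\rangle=0$ for all $a$. Steps: $x\xrightarrow{a}y$ iff $x=c+a_-$, $y=c+a_+$, $c\in\mathbb{N}^d$; a bottom SCC is a nonempty set $X$ of configurations with $\{y\mid x\xrightarrow{*}y\}=X$ for all $x\in X$. For $I\subseteq[1,d]$, $x|_I$ denotes restriction to $I$ and $A|_I$ the net with actions $((a_-)|_I,(a_+)|_I)$. A $d$-dim PNS is $G=G_{(X,I)}=(Q,A,E)$ where $A$ is a conservative $d$-dim net, $X$ a bottom SCC of $A$, $I\subseteq[1,d]$, $Q=\{x|_I\mid x\in X\}$, and $E=\{(p,a,q)\in Q\times A\times Q\mid p\xrightarrow{a}q\text{ in }A|_I\}$. Configurations of $G$ are pairs $(p,x)$, $p\in Q$, $x\in\mathbb{N}^J$.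 Virtual reachability in $G$: $(p,x)\dashrightarrow^*(q,y)$ iff there is a path from $p$ to $q$ in the labelled graph $(Q,A,E)$ labelled by some $\sigma$ with $\Delta(\sigma)|_J=y-x$. The $|J|$-dim net $A_{SC}^G$ has, for each $z$ in the set of displacements $\Delta(\sigma)|_J$ of simple cycles (labelled $\sigma$) of the graph $(Q,A,E)$, the action $(z_-,z_+)$ where $z_+=\max(z,\mathbf{0})$ and $z_-=\max(-z,\mathbf{0})$ componentwise; $(A_{SC}^G)_\Delta^*$ is the set of finite sums of these displacements $z$. *)

theory Defs
  imports Main
begin

text \<open>Coordinates [1,d] are represented by the index set {..<d} = {0,...,d-1}.
  A vector in N^D (D a set of indices) is a function nat => nat vanishing outside D.\<close>

type_synonym vec = "nat \<Rightarrow> nat"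
type_synonym zvec = "nat \<Rightarrow> int"
type_synonym action = "vec \<times> vec"

definition is_vec :: "nat set \<Rightarrow> vec \<Rightarrow> bool" where
  "is_vec D x \<longleftrightarrow> (\<forall>i. i \<notin> D \<longrightarrow> x i = 0)"

definition petri_net :: "nat \<Rightarrow> action set \<Rightarrow> bool" where
  "petri_net d A \<longleftrightarrow> finite A \<and> (\<forall>a\<in>A. is_vec {..<d} (fst a) \<and> is_vec {..<d} (snd a))"

definition delta :: "action \<Rightarrow> zvec" where
  "delta a = (\<lambda>i. int (snd a i) - int (fst a i))"

definition seq_delta :: "action list \<Rightarrow> zvec" where
  "seq_delta \<sigma> = (\<lambda>i. sum_list (map (\<lambda>a. delta a i) \<sigma>))"

definition net_norm :: "nat set \<Rightarrow> action set \<Rightarrow> nat" where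
  "net_norm D A = Max ({0} \<union> {fst a i | a i. a \<in> A \<and> i \<in> D} \<union> {snd a i | a i. a \<in> A \<and> i \<in> D})"

definition conservative :: "nat \<Rightarrow> action set \<Rightarrow> bool" where
  "conservative d A \<longleftrightarrow> (\<exists>w::nat \<Rightarrow> nat. (\<forall>i<d. 0 < w i) \<and>
      (\<forall>a\<in>A. (\<Sum>i<d. delta a i * int (w i)) = 0))"

definition step :: "nat set \<Rightarrow> vec \<Rightarrow> action \<Rightarrow> vec \<Rightarrow> bool" where
  "step D x a y \<longleftrightarrow> (\<exists>c. is_vec D c \<and> x = (\<lambda>i. c i + fst a i) \<and> y = (\<lambda>i. c i + snd a i))"

definition reach :: "nat set \<Rightarrow> action set \<Rightarrow> vec \<Rightarrow> vec \<Rightarrow> bool" where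
  "reach D A = (\<lambda>x y. \<exists>a\<in>A. step D x a y)\<^sup>*\<^sup>*"

definition bottom_scc :: "nat \<Rightarrow> action set \<Rightarrow> vec set \<Rightarrow> bool" where
  "bottom_scc d A X \<longleftrightarrow> X \<noteq> {} \<and>
     (\<forall>x\<in>X. is_vec {..<d} x \<and> {y. reach {..<d} A x y} = X)"

definition restr :: "nat set \<Rightarrow> vec \<Rightarrow> vec" where
  "restr I x = (\<lambda>i. if i \<in> I then x i else 0)"

definition restrz :: "nat set \<Rightarrow> zvec \<Rightarrow> zvec" where
  "restrz I z = (\<lambda>i. if i \<in> I then z i else 0)"

definition restr_act :: "nat set \<Rightarrow> action \<Rightarrow> action" where
  "restr_act I a = (restr I (fst a), restr I (snd a))"

definition is_pns :: "nat \<Rightarrow> action set \<Rightarrow> vec set \<Rightarrow> nat set \<Rightarrow> bool" where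
  "is_pns d A X I \<longleftrightarrow> petri_net d A \<and> conservative d A \<and> bottom_scc d A X \<and> I \<subseteq> {..<d}"

definition pns_Q :: "nat set \<Rightarrow> vec set \<Rightarrow> vec set" where
  "pns_Q I X = restr I ` X"

definition pns_E :: "action set \<Rightarrow> vec set \<Rightarrow> nat set \<Rightarrow> (vec \<times> action \<times> vec) set" where
  "pns_E A X I = {(p, a, q). p \<in> pns_Q I X \<and> a \<in> A \<and> q \<in> pns_Q I X \<and> step I p (restr_act I a) q}"

fun is_path :: "('q \<times> 'l \<times> 'q) set \<Rightarrow> 'q \<Rightarrow> ('q \<times> 'l \<times> 'q) list \<Rightarrow> 'q \<Rightarrow> bool" where
  "is_path E p [] q \<longleftrightarrow> p = q"
| "is_path E p (e # es) q \<longleftrightarrow> fst e = p \<and> e \<in> E \<and> is_path E (snd (snd e)) es q"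

definition labels :: "('q \<times> 'l \<times> 'q) list \<Rightarrow> 'l list" where
  "labels es = map (\<lambda>e. fst (snd e)) es"

definition simple_cycle :: "('q \<times> 'l \<times> 'q) set \<Rightarrow> ('q \<times> 'l \<times> 'q) list \<Rightarrow> bool" where
  "simple_cycle E es \<longleftrightarrow> es \<noteq> [] \<and> (\<exists>p. is_path E p es p) \<and> distinct (map fst es)"

definition virt_reach :: "nat \<Rightarrow> action set \<Rightarrow> vec set \<Rightarrow> nat set \<Rightarrow> vec \<times> vec \<Rightarrow> vec \<times> vec \<Rightarrow> bool" where
  "virt_reach d A X I px qy \<longleftrightarrow> (\<exists>es. is_path (pns_E A X I) (fst px) es (fst qy) \<and>
      (\<forall>i\<in>{..<d} - I. seq_delta (labels es) i = int (snd qy i) - int (snd px i)))"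

definition sc_disp :: "nat \<Rightarrow> action set \<Rightarrow> vec set \<Rightarrow> nat set \<Rightarrow> zvec set" where
  "sc_disp d A X I = {restrz ({..<d} - I) (seq_delta (labels es)) | es. simple_cycle (pns_E A X I) es}"

definition z_action :: "zvec \<Rightarrow> action" where
  "z_action z = ((\<lambda>i. nat (- z i)), (\<lambda>i. nat (z i)))"

definition A_SC :: "nat \<Rightarrow> action set \<Rightarrow> vec set \<Rightarrow> nat set \<Rightarrow> action set" where
  "A_SC d A X I = z_action ` sc_disp d A X I"

inductive_set delta_star :: "action set \<Rightarrow> zvec set" for B where
  zero: "(\<lambda>i. 0) \<in> delta_star B"
| add: "s \<in> delta_star B \<Longrightarrow> a \<in> B \<Longrightarrow> (\<lambda>i. s i + delta a i) \<in> delta_star B"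

end

theory Submission
  imports Defs
begin

lemma is_path_append:
  "is_path E p (xs @ ys) q \<longleftrightarrow> (\<exists>r. is_path E p xs r \<and> is_path E r ys q)"
  by (induction xs arbitrary: p) auto

lemma seq_delta_append:
  "seq_delta (xs @ ys) i = seq_delta xs i + seq_delta ys i"
  by (simp add: seq_delta_def)

lemma labels_append: "labels (xs @ ys) = labels xs @ labels ys"
  by (simp add: labels_def)

lemma is_path_split:
  "is_path E p es q \<Longrightarrow> i < length es \<Longrightarrow>
    is_path E p (take i es) (fst (es!i)) \<and> is_path E (fst (es!i)) (drop i es) q"
proof (induction es arbitrary: p i)
  case Nil then show ?case by simp
next
  case (Cons e es)
  show ?case
  proof (cases i)
    case 0 then show ?thesis using Cons.prems by auto
  next
    case (Suc k)
    then have "k < length es" using Cons.prems by simp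
    from Cons.IH[OF _ this] Cons.prems Suc show ?thesis by auto
  qed
qed

lemma is_path_edges: "is_path E p es q \<Longrightarrow> set es \<subseteq> E"
  by (induction es arbitrary: p) auto

lemma delta_star_plus:
  assumes "t \<in> delta_star B" "s \<in> delta_star B"
  shows "(\<lambda>i. s i + t i) \<in> delta_star B"
  using assms(1)
proof induction
  case zero then show ?case using assms(2) by simp
next
  case (add t a)
  have "(\<lambda>i. (s i + t i) + delta a i) \<in> delta_star B"
    using delta_star.add[OF add.IH add.hyps(2)] .
  moreover have "(\<lambda>i. s i + (t i + delta a i)) = (\<lambda>i. (s i + t i) + delta a i)"
    by (simp add: algebra_simps)
  ultimately show ?case by simp
qed

lemma delta_z_action: "delta (z_action z) = z"
  by (simp add: delta_def z_action_def fun_eq_iff)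

lemma closed_walk_decomp:
  assumes "is_path E p es p"
  shows "restrz J (seq_delta (labels es)) \<in>
    delta_star (z_action ` {restrz J (seq_delta (labels es)) | es. simple_cycle E es})"
  using assms
proof (induction "length es" arbitrary: es p rule: less_induct)
  case less
  let ?B = "z_action ` {restrz J (seq_delta (labels es)) | es. simple_cycle E es}"
  show ?case
  proof (cases "distinct (map fst es)")
    case True
    show ?thesis
    proof (cases "es = []")
      case True
      have "restrz J (seq_delta (labels es)) = (\<lambda>i. 0)"
        using True by (simp add: restrz_def seq_delta_def labels_def fun_eq_iff)
      then show ?thesis using delta_star.zero by simp
    next
      case False
      then have sc: "simple_cycle E es" using True less.prems by (auto simp: simple_cycle_def)
      let ?z = "restrz J (seq_delta (labels es))"
      have "z_action ?z \<in> ?B" using sc by blast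
      from delta_star.add[OF delta_star.zero this]
      show ?thesis by (simp add: delta_z_action)
    qed
  next
    case False
    then obtain i j where ij0: "i < length es" "j < length es" "i \<noteq> j" "fst (es!i) = fst (es!j)"
      by (auto simp: distinct_conv_nth)
    have "\<exists>i j. i < j \<and> j < length es \<and> fst (es!i) = fst (es!j)"
    proof (cases "i < j")
      case True then show ?thesis using ij0 by blast
    next
      case False then have "j < i" using ij0 by simp
      then show ?thesis using ij0 by metis
    qed
    then obtain i j where ij: "i < j" "j < length es" "fst (es!i) = fst (es!j)" by blast
    define v where "v = fst (es!i)"
    define es1 where "es1 = take i es"
    define es2 where "es2 = take (j - i) (drop i es)"
    define es3 where "es3 = drop j es"
    have d3: "drop (j - i) (drop i es) = es3"
      using ij unfolding es3_def by simp
    have split: "es = es1 @ es2 @ es3"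
      unfolding es1_def es2_def by (metis append_take_drop_id d3)
    from is_path_split[OF less.prems, of i] ij
    have p1: "is_path E p es1 v" and p23: "is_path E v (drop i es) p"
      unfolding es1_def v_def by auto
    have "j - i < length (drop i es)" using ij by simp
    moreover have "drop i es ! (j - i) = es ! j" using ij by simp
    ultimately have p2: "is_path E v es2 v" and p3: "is_path E v es3 p"
      using is_path_split[OF p23, of "j - i"] ij unfolding es2_def v_def d3 by auto
    have c13: "is_path E p (es1 @ es3) p" using p1 p3 is_path_append by metis
    have l13: "length (es1 @ es3) < length es" using ij unfolding es1_def es3_def by simp
    have l2: "length es2 < length es" using ij unfolding es2_def by simp
    have r13: "restrz J (seq_delta (labels (es1 @ es3))) \<in> delta_star ?B"
      using less.hyps[OF l13 c13] .
    have r2: "restrz J (seq_delta (labels es2)) \<in> delta_star ?B"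
      using less.hyps[OF l2 p2] .
    have eq: "restrz J (seq_delta (labels es)) =
       (\<lambda>k. restrz J (seq_delta (labels (es1 @ es3))) k + restrz J (seq_delta (labels es2)) k)"
      by (subst split) (simp add: fun_eq_iff restrz_def labels_append seq_delta_append)
    show ?thesis using delta_star_plus[OF r2 r13] eq by simp
  qed
qed

lemma real_run:
  assumes "is_pns d A X I" "x \<in> X" "reach {..<d} A x y"
  shows "\<exists>es. is_path (pns_E A X I) (restr I x) es (restr I y) \<and>
            (\<forall>i. seq_delta (labels es) i = int (y i) - int (x i))"
  using assms(3) unfolding reach_def
proof (induction rule: rtranclp_induct)
  case base
  show ?case by (intro exI[of _ "[]"]) (simp add: seq_delta_def labels_def)
next
  case (step y z)
  from step.IH obtain es where es: "is_path (pns_E A X I) (restr I x) es (restr I y)"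
    "\<forall>i. seq_delta (labels es) i = int (y i) - int (x i)" by blast
  from step.hyps(2) obtain a c where a: "a \<in> A" "is_vec {..<d} c"
    "y = (\<lambda>i. c i + fst a i)" "z = (\<lambda>i. c i + snd a i)"
    by (auto simp: step_def)
  have bs: "bottom_scc d A X" using assms(1) by (simp add: is_pns_def)
  have "y \<in> X" using bs assms(2) step.hyps(1) unfolding bottom_scc_def reach_def by blast
  have rz: "reach {..<d} A x z" unfolding reach_def
    apply (rule rtranclp.rtrancl_into_rtrancl[OF step.hyps(1)]) using step.hyps(2) by simp
  have "z \<in> X" using bs assms(2) rz unfolding bottom_scc_def by blast
  have st: "step I (restr I y) (restr_act I a) (restr I z)"
    unfolding step_def
    apply (rule exI[of _ "restr I c"])
    using a by (auto simp: is_vec_def restr_def restr_act_def fun_eq_iff)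
  have e: "(restr I y, a, restr I z) \<in> pns_E A X I"
    using st a(1) \<open>y \<in> X\<close> \<open>z \<in> X\<close> by (auto simp: pns_E_def pns_Q_def)
  have pth: "is_path (pns_E A X I) (restr I x) (es @ [(restr I y, a, restr I z)]) (restr I z)"
    unfolding is_path_append using es(1) e by auto
  have "\<forall>i. seq_delta (labels (es @ [(restr I y, a, restr I z)])) i = int (z i) - int (x i)"
  proof
    fix i
    have s1: "seq_delta (labels [(restr I y, a, restr I z)]) i = delta a i"
      by (simp add: labels_def seq_delta_def)
    have yi: "y i = c i + fst a i" and zi: "z i = c i + snd a i" using a(3,4) by simp_all
    show "seq_delta (labels (es @ [(restr I y, a, restr I z)])) i = int (z i) - int (x i)"
      unfolding labels_append seq_delta_append s1 using es(2) yi zi by (simp add: delta_def)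
  qed
  with pth show ?case by blast
qed

lemma conn:
  assumes "is_pns d A X I" "p \<in> pns_Q I X" "q \<in> pns_Q I X"
  shows "\<exists>P1 P2. is_path (pns_E A X I) p P1 q \<and> is_path (pns_E A X I) q P2 p \<and>
     (\<forall>i. seq_delta (labels P1) i + seq_delta (labels P2) i = 0)"
proof -
  obtain x x' where x: "x \<in> X" "p = restr I x" "x' \<in> X" "q = restr I x'"
    using assms(2,3) by (auto simp: pns_Q_def)
  have bs: "bottom_scc d A X" using assms(1) by (simp add: is_pns_def)
  have r1: "reach {..<d} A x x'" and r2: "reach {..<d} A x' x"
    using bs x unfolding bottom_scc_def by blast+
  from real_run[OF assms(1) x(1) r1] obtain P1 where P1: "is_path (pns_E A X I) p P1 q"
    "\<forall>i. seq_delta (labels P1) i = int (x' i) - int (x i)" using x by blast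
  from real_run[OF assms(1) x(3) r2] obtain P2 where P2: "is_path (pns_E A X I) q P2 p"
    "\<forall>i. seq_delta (labels P2) i = int (x i) - int (x' i)" using x by blast
  show ?thesis using P1 P2 by (intro exI[of _ P1] exI[of _ P2]) simp
qed

lemma backward:
  assumes "is_pns d A X I" "p \<in> pns_Q I X" "s \<in> delta_star (A_SC d A X I)"
  shows "\<exists>es. is_path (pns_E A X I) p es p \<and> (\<forall>i\<in>{..<d} - I. seq_delta (labels es) i = s i)"
  using assms(3)
proof induction
  case zero then show ?case by (intro exI[of _ "[]"]) (simp add: seq_delta_def labels_def)
next
  case (add s a)
  from add.IH obtain W where W: "is_path (pns_E A X I) p W p"
    "\<forall>i\<in>{..<d} - I. seq_delta (labels W) i = s i" by blast
  from add.hyps(2) obtain C where a: "a = z_action (restrz ({..<d} - I) (seq_delta (labels C)))"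
    and sc: "simple_cycle (pns_E A X I) C"
    unfolding A_SC_def sc_disp_def by blast
  from sc obtain q where C: "is_path (pns_E A X I) q C q" and "C \<noteq> []"
    unfolding simple_cycle_def by blast
  then have "q \<in> pns_Q I X" by (cases C) (auto simp: pns_E_def)
  from conn[OF assms(1) assms(2) this] obtain P1 P2 where
    P: "is_path (pns_E A X I) p P1 q" "is_path (pns_E A X I) q P2 p"
    "\<forall>i. seq_delta (labels P1) i + seq_delta (labels P2) i = 0" by blast
  have pth: "is_path (pns_E A X I) p (W @ P1 @ C @ P2) p"
    unfolding is_path_append using W(1) P(1,2) C by blast
  have "\<forall>i\<in>{..<d} - I. seq_delta (labels (W @ P1 @ C @ P2)) i = s i + delta a i"
  proof
    fix i assume i: "i \<in> {..<d} - I"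
    have "seq_delta (labels P1) i + seq_delta (labels P2) i = 0" using P(3) by blast
    then show "seq_delta (labels (W @ P1 @ C @ P2)) i = s i + delta a i"
      using W(2) i by (simp add: labels_append seq_delta_append a delta_z_action restrz_def)
  qed
  with pth show ?case by blast
qed

lemma reach_weight:
  assumes "petri_net d A" "\<forall>a\<in>A. (\<Sum>i<d. delta a i * int (w i)) = 0"
    "reach {..<d} A x y" "is_vec {..<d} x"
  shows "is_vec {..<d} y \<and> (\<Sum>i<d. int (y i) * int (w i)) = (\<Sum>i<d. int (x i) * int (w i))"
  using assms(3) unfolding reach_def
proof (induction rule: rtranclp_induct)
  case base then show ?case using assms(4) by simp
next
  case (step y z)
  then obtain a c where a: "a \<in> A" "is_vec {..<d} c" "y = (\<lambda>i. c i + fst a i)" "z = (\<lambda>i. c i + snd a i)"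
    by (auto simp: step_def)
  have vz: "is_vec {..<d} z" using a assms(1) by (auto simp: is_vec_def petri_net_def)
  have pt: "\<And>i. int (z i) * int (w i) = int (y i) * int (w i) + delta a i * int (w i)"
    using a by (simp add: delta_def algebra_simps)
  have "(\<Sum>i<d. int (z i) * int (w i)) = (\<Sum>i<d. int (y i) * int (w i)) + (\<Sum>i<d. delta a i * int (w i))"
    by (simp add: pt sum.distrib)
  also have "\<dots> = (\<Sum>i<d. int (y i) * int (w i))" using assms(2) a(1) by simp
  finally show ?case using step.IH vz by simp
qed

lemma finite_X:
  assumes "is_pns d A X I" shows "finite X"
proof -
  from assms obtain w where w: "\<forall>i<d. 0 < w i" "\<forall>a\<in>A. (\<Sum>i<d. delta a i * int (w i)) = 0"
    unfolding is_pns_def conservative_def by blast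
  from assms obtain x0 where x0: "x0 \<in> X" unfolding is_pns_def bottom_scc_def by blast
  define W where "W = (\<Sum>i<d. int (x0 i) * int (w i))"
  have sub: "X \<subseteq> {f. \<forall>i. (i \<in> {..<d} \<longrightarrow> f i \<in> {..nat W}) \<and> (i \<notin> {..<d} \<longrightarrow> f i = 0)}"
  proof
    fix y assume y: "y \<in> X"
    have r: "reach {..<d} A x0 y" and v0: "is_vec {..<d} x0"
      using assms x0 y unfolding is_pns_def bottom_scc_def by blast+
    from reach_weight[OF _ w(2) r v0] assms have vy: "is_vec {..<d} y"
      and sy: "(\<Sum>i<d. int (y i) * int (w i)) = W"
      unfolding is_pns_def W_def by auto
    have "y i \<le> nat W" if "i < d" for i
    proof -
      have "1 \<le> w i" using w(1) that by (simp add: Suc_le_eq)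
      then have "y i \<le> y i * w i" using mult_le_mono2[of 1 "w i" "y i"] by simp
      then have "int (y i) \<le> int (y i) * int (w i)" by (metis of_nat_le_iff of_nat_mult)
      also have "\<dots> \<le> (\<Sum>j<d. int (y j) * int (w j))"
        by (rule member_le_sum) (use that in auto)
      finally show ?thesis using sy by simp
    qed
    then show "y \<in> {f. \<forall>i. (i \<in> {..<d} \<longrightarrow> f i \<in> {..nat W}) \<and> (i \<notin> {..<d} \<longrightarrow> f i = 0)}"
      using vy by (auto simp: is_vec_def)
  qed
  show ?thesis
    by (rule finite_subset[OF sub]) (rule finite_set_of_finite_funs; simp)
qed

lemma seq_delta_bound:
  assumes "\<forall>a\<in>set \<sigma>. \<bar>delta a i\<bar> \<le> int N"
  shows "\<bar>seq_delta \<sigma> i\<bar> \<le> int (length \<sigma> * N)"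
  using assms
proof (induction \<sigma>)
  case Nil then show ?case by (simp add: seq_delta_def)
next
  case (Cons a \<sigma>)
  have "\<bar>seq_delta (a # \<sigma>) i\<bar> \<le> \<bar>delta a i\<bar> + \<bar>seq_delta \<sigma> i\<bar>"
    by (simp add: seq_delta_def abs_triangle_ineq)
  then show ?case using Cons by simp
qed

lemma norm_A:
  assumes "petri_net d A" "a \<in> A" "i < d"
  shows "fst a i \<le> net_norm {..<d} A" "snd a i \<le> net_norm {..<d} A"
proof -
  have fin: "finite ({0} \<union> {fst a i | a i. a \<in> A \<and> i \<in> {..<d}} \<union> {snd a i | a i. a \<in> A \<and> i \<in> {..<d}})"
  proof -
    have fA: "finite A" using assms(1) by (simp add: petri_net_def)
    have "{fst a i | a i. a \<in> A \<and> i \<in> {..<d}} \<subseteq> (\<lambda>(a,i). fst a i) ` (A \<times> {..<d})"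
    proof
      fix v assume "v \<in> {fst a i | a i. a \<in> A \<and> i \<in> {..<d}}"
      then obtain a i where "v = fst a i" "a \<in> A" "i < d" by blast
      then show "v \<in> (\<lambda>(a,i). fst a i) ` (A \<times> {..<d})"
        by (intro image_eqI[where x="(a,i)"]) auto
    qed
    moreover have "{snd a i | a i. a \<in> A \<and> i \<in> {..<d}} \<subseteq> (\<lambda>(a,i). snd a i) ` (A \<times> {..<d})"
    proof
      fix v assume "v \<in> {snd a i | a i. a \<in> A \<and> i \<in> {..<d}}"
      then obtain a i where "v = snd a i" "a \<in> A" "i < d" by blast
      then show "v \<in> (\<lambda>(a,i). snd a i) ` (A \<times> {..<d})"
        by (intro image_eqI[where x="(a,i)"]) auto
    qed
    ultimately show ?thesis using fA by (meson finite_Un finite_SigmaI finite_imageI finite_lessThan finite_subset finite.intros)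
  qed
  show "fst a i \<le> net_norm {..<d} A" unfolding net_norm_def
    by (rule Max_ge[OF fin]) (use assms in blast)
  show "snd a i \<le> net_norm {..<d} A" unfolding net_norm_def
    by (rule Max_ge[OF fin]) (use assms in blast)
qed

lemma norm_SC:
  assumes "is_pns d A X I"
  shows "net_norm ({..<d} - I) (A_SC d A X I) \<le> net_norm {..<d} A * card (pns_Q I X)"
proof -
  define N where "N = net_norm {..<d} A"
  define K where "K = N * card (pns_Q I X)"
  have pn: "petri_net d A" using assms by (simp add: is_pns_def)
  have finQ: "finite (pns_Q I X)" using finite_X[OF assms] by (simp add: pns_Q_def)
  have key: "nat (- z i) \<le> K \<and> nat (z i) \<le> K" if "z \<in> sc_disp d A X I" "i \<in> {..<d} - I" for z i
  proof -
    from that obtain C where z: "z = restrz ({..<d} - I) (seq_delta (labels C))"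
      and sc: "simple_cycle (pns_E A X I) C"
      unfolding sc_disp_def by blast
    from sc obtain q where C: "is_path (pns_E A X I) q C q" and dist: "distinct (map fst C)"
      unfolding simple_cycle_def by blast
    have edges: "set C \<subseteq> pns_E A X I" using is_path_edges[OF C] .
    have "set (map fst C) \<subseteq> pns_Q I X" using edges by (auto simp: pns_E_def)
    then have "card (set (map fst C)) \<le> card (pns_Q I X)" using finQ card_mono by blast
    then have len: "length C \<le> card (pns_Q I X)" using dist distinct_card by fastforce
    have "\<forall>a\<in>set (labels C). \<bar>delta a i\<bar> \<le> int N"
    proof
      fix a assume "a \<in> set (labels C)"
      then have aA: "a \<in> A" using edges by (auto simp: labels_def pns_E_def)
      have "i < d" using that(2) by simp
      from norm_A[OF pn aA this] show "\<bar>delta a i\<bar> \<le> int N"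
        by (simp add: delta_def N_def)
    qed
    from seq_delta_bound[OF this] have "\<bar>seq_delta (labels C) i\<bar> \<le> int (length C * N)"
      by (simp add: labels_def)
    also have "\<dots> \<le> int K"
    proof -
      have "length C * N \<le> K" using len unfolding K_def by (simp add: mult.commute mult_le_mono2)
      then show ?thesis by (simp only: of_nat_le_iff)
    qed
    finally have "\<bar>z i\<bar> \<le> int K" using z that(2) by (simp add: restrz_def)
    then show ?thesis by linarith
  qed
  define S where "S = {0} \<union> {fst a i | a i. a \<in> A_SC d A X I \<and> i \<in> {..<d} - I}
     \<union> {snd a i | a i. a \<in> A_SC d A X I \<and> i \<in> {..<d} - I}"
  have bound: "\<forall>v\<in>S. v \<le> K"
    unfolding S_def A_SC_def using key by (auto simp: z_action_def)
  then have "finite S" using finite_subset[of S "{..K}"] by auto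
  moreover have "S \<noteq> {}" unfolding S_def by simp
  ultimately have "Max S \<le> K" using bound Max_le_iff by blast
  then show ?thesis unfolding net_norm_def S_def K_def N_def .
qed

theorem proposition15:
  fixes d :: nat and A :: "action set" and X :: "vec set" and I :: "nat set"
  assumes "is_pns d A X I"
  shows "(\<forall>p\<in>pns_Q I X. \<forall>x y. is_vec ({..<d} - I) x \<longrightarrow> is_vec ({..<d} - I) y \<longrightarrow>
            (virt_reach d A X I (p, x) (p, y) \<longleftrightarrow>
             (\<lambda>i. int (y i) - int (x i)) \<in> delta_star (A_SC d A X I)))
         \<and> net_norm ({..<d} - I) (A_SC d A X I) \<le> net_norm {..<d} A * card (pns_Q I X)"
proof (intro conjI ballI allI impI)
  fix p x y assume p: "p \<in> pns_Q I X" and vx: "is_vec ({..<d} - I) x"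
    and vy: "is_vec ({..<d} - I) y"
  show "virt_reach d A X I (p, x) (p, y) \<longleftrightarrow>
             (\<lambda>i. int (y i) - int (x i)) \<in> delta_star (A_SC d A X I)"
  proof
    assume "virt_reach d A X I (p, x) (p, y)"
    then obtain es where es: "is_path (pns_E A X I) p es p"
      "\<forall>i\<in>{..<d} - I. seq_delta (labels es) i = int (y i) - int (x i)"
      unfolding virt_reach_def by auto
    have eq: "restrz ({..<d} - I) (seq_delta (labels es)) = (\<lambda>i. int (y i) - int (x i))"
      using es(2) vx vy by (auto simp: restrz_def is_vec_def fun_eq_iff)
    from closed_walk_decomp[OF es(1), of "{..<d} - I"] eq
    show "(\<lambda>i. int (y i) - int (x i)) \<in> delta_star (A_SC d A X I)"
      by (simp add: A_SC_def sc_disp_def)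
  next
    assume "(\<lambda>i. int (y i) - int (x i)) \<in> delta_star (A_SC d A X I)"
    from backward[OF assms p this] show "virt_reach d A X I (p, x) (p, y)"
      unfolding virt_reach_def by auto
  qed
next
  show "net_norm ({..<d} - I) (A_SC d A X I) \<le> net_norm {..<d} A * card (pns_Q I X)"
    by (rule norm_SC[OF assms])
qed

end
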